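(* Let $p$ be an odd prime, let $d>1$ be an integer, and let $q$ be an even power of $p$ with $q \equiv 1 \pmod{2d}$. The subfield $\mathbb{F}_{\sqrt{q}}$ of $\mathbb{F}_q$ forms a clique in the generalized Paley graph $GP(q,d)$ if and only if $d \mid (\sqrt{q}+1)$.
   Context: For a prime power $q$ and an integer $d>1$ with $d \mid q-1$, the $d$-Paley graph $GP(q,d)$ is the graph with vertex set $\mathbb{F}_q$ in which two distinct vertices $x,y$ are adjacent if and only if $x-y$ is a $d$-th power in $\mathbb{F}_q^*$. *)

theory Defs
  imports "HOL-Computational_Algebra.Primes" "HOL-Library.Cardinality" "HOL-Number_Theory.Cong"
begin

definition gp_adj :: "nat \<Rightarrow> 'a::field \<Rightarrow> 'a \<Rightarrow> bool" where
  "gp_adj d x y \<longleftrightarrow> x \<noteq> y \<and> (\<exists>z. z \<noteq> 0 \<and> x - y = z ^ d)"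

definition gp_clique :: "nat \<Rightarrow> 'a::field set \<Rightarrow> bool" where
  "gp_clique d S \<longleftrightarrow> (\<forall>x\<in>S. \<forall>y\<in>S. x \<noteq> y \<longrightarrow> gp_adj d x y)"

definition is_subfield :: "'a::field set \<Rightarrow> bool" where
  "is_subfield S \<longleftrightarrow> 0 \<in> S \<and> 1 \<in> S \<and>
     (\<forall>x\<in>S. \<forall>y\<in>S. x + y \<in> S \<and> x * y \<in> S) \<and>
     (\<forall>x\<in>S. - x \<in> S) \<and> (\<forall>x\<in>S. x \<noteq> 0 \<longrightarrow> inverse x \<in> S)"

end

theory Submission
  imports Defs "HOL-Computational_Algebra.Polynomial"
begin

lemma pow_card_eq_1:
  fixes T :: "'a::field set"
  assumes fin: "finite T" and nz: "0 \<notin> T" and cl: "\<forall>x\<in>T. \<forall>y\<in>T. x*y \<in> T" and xT: "x \<in> T"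
  shows "x ^ card T = 1"
proof -
  have x0: "x \<noteq> 0" using nz xT by auto
  have inj: "inj_on ((*) x) T" using x0 by (auto simp: inj_on_def)
  have sub: "(*) x ` T \<subseteq> T" using cl xT by auto
  have img: "(*) x ` T = T"
    using card_subset_eq[OF fin sub] card_image[OF inj] by simp
  have "prod id T = prod id ((*) x ` T)" by (simp add: img)
  also have "\<dots> = prod ((*) x) T" by (simp add: prod.reindex[OF inj])
  also have "\<dots> = x ^ card T * prod id T" by (simp add: prod.distrib)
  finally have e: "prod id T = x ^ card T * prod id T" .
  have "prod id T \<noteq> 0" using fin nz by (simp add: prod_zero_iff)
  with e show ?thesis by simp
qed

lemma card_pow_eq_le:
  fixes c :: "'a::field"
  assumes "m \<ge> 1"
  shows "card {x. x ^ m = c} \<le> m"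
proof -
  define P where "P = monom (1::'a) m + [:-c:]"
  have dP: "degree P = m" unfolding P_def using assms
    by (subst degree_add_eq_left) (auto simp: degree_monom_eq)
  hence "P \<noteq> 0" using assms by auto
  have "{x. x ^ m = c} = {x. poly P x = 0}" unfolding P_def
    by (auto simp: poly_monom)
  thus ?thesis using card_poly_roots_bound[OF \<open>P \<noteq> 0\<close>] dP by simp
qed

lemma pow_gcd_eq_1:
  fixes x :: "'a::comm_monoid_mult"
  shows "x ^ a = 1 \<Longrightarrow> x ^ b = 1 \<Longrightarrow> x ^ gcd a b = 1"
proof (induction a b rule: gcd_nat_induct)
  fix m :: nat
  show "x ^ m = 1 \<Longrightarrow> x ^ 0 = 1 \<Longrightarrow> x ^ gcd m 0 = 1" by simp
next
  fix m n :: nat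
  assume n0: "0 < n" and IH: "x ^ n = 1 \<Longrightarrow> x ^ (m mod n) = 1 \<Longrightarrow> x ^ gcd n (m mod n) = 1"
  assume a: "x ^ m = 1" "x ^ n = 1"
  have "x ^ m = (x ^ n) ^ (m div n) * x ^ (m mod n)"
    by (metis div_mult_mod_eq power_add power_mult mult.commute)
  hence "x ^ (m mod n) = 1" using a by simp
  hence "x ^ gcd n (m mod n) = 1" using IH a by simp
  thus "x ^ gcd m n = 1" using gcd_non_0_nat[of n m] n0 by simp
qed

lemma euler_crit:
  fixes w :: "'a::{field,finite}"
  assumes N: "N = CARD('a) - 1" and dN: "d dvd N" and d1: "d \<ge> 1"
    and w: "w ^ (N div d) = 1"
  shows "\<exists>z. z \<noteq> 0 \<and> w = z ^ d"
proof -
  define M where "M = N div d"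
  have NM: "N = M * d" using dN unfolding M_def by simp
  define Fs where "Fs = (UNIV - {0::'a})"
  have cF: "card Fs = N" unfolding Fs_def N by (simp add: card_Diff_singleton)
  have ferm: "z ^ N = 1" if "z \<noteq> 0" for z :: 'a
  proof -
    have "z ^ card Fs = 1"
      by (rule pow_card_eq_1) (use that in \<open>auto simp: Fs_def\<close>)
    thus ?thesis using cF by simp
  qed
  have "card {0::'a, 1} \<le> CARD('a)" by (rule card_mono) auto
  hence N0: "N > 0" unfolding N by simp
  hence M1: "M \<ge> 1" using NM by (cases M) auto
  define D where "D = (\<lambda>z. z ^ d) ` Fs"
  define R where "R = {x::'a. x ^ M = 1}"
  have DR: "D \<subseteq> R" unfolding D_def R_def Fs_def
    using ferm by (auto simp: power_mult[symmetric] NM mult.commute)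
  have cR: "card R \<le> M" unfolding R_def by (rule card_pow_eq_le[OF M1])
  have "Fs \<subseteq> (\<Union>y\<in>D. {z. z ^ d = y})" unfolding D_def by auto
  hence "N \<le> card (\<Union>y\<in>D. {z. z ^ d = y})" using cF
    by (metis card_mono finite)
  also have "\<dots> \<le> (\<Sum>y\<in>D. card {z. z ^ d = y})" by (rule card_UN_le) simp
  also have "\<dots> \<le> (\<Sum>y\<in>D. d)" by (rule sum_mono) (rule card_pow_eq_le[OF d1])
  also have "\<dots> = card D * d" by simp
  finally have "M * d \<le> card D * d" using NM by simp
  hence "M \<le> card D" using d1 by simp
  hence "card D = card R" using cR card_mono[OF _ DR] by simp
  hence "D = R" using DR by (simp add: card_subset_eq)
  moreover have "w \<in> R" using w unfolding R_def M_def by simp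
  ultimately obtain z where "z \<in> Fs" "w = z ^ d" unfolding D_def by auto
  thus ?thesis unfolding Fs_def by auto
qed

theorem lemma1p5:
  fixes p k d :: nat and S :: "'a::{field,finite} set"
  assumes "prime p" and "odd p" and "k \<ge> 1" and "d > 1"
    and "CARD('a) = p ^ (2 * k)"
    and "[p ^ (2 * k) = 1] (mod (2 * d))"
    and "is_subfield S" and "card S = p ^ k"
  shows "gp_clique d S \<longleftrightarrow> d dvd (p ^ k + 1)"
proof -
  define r where "r = p ^ k"
  define N where "N = CARD('a) - 1"
  have "p \<noteq> 2" using assms(2) by auto
  hence p3: "p \<ge> 3" using prime_ge_2_nat[OF assms(1)] by linarith
  have "p \<le> p ^ k" using assms(3) p3 by (simp add: self_le_power)
  hence r3: "r \<ge> 3" unfolding r_def using p3 by linarith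
  have Nr: "N = (r - 1) * (r + 1)"
  proof -
    have "CARD('a) = r * r" unfolding r_def using assms(5)
      by (simp add: power_mult power2_eq_square power_mult_distrib)
    thus ?thesis unfolding N_def using r3 by (simp add: algebra_simps)
  qed
  have dN: "d dvd N" using cong_to_1_nat[OF assms(6)] assms(5) unfolding N_def
    using dvd_mult_right[OF cong_to_1_nat[OF assms(6)]] by simp
  define M where "M = N div d"
  have NM: "N = M * d" using dN unfolding M_def by simp
  have cF: "card (UNIV - {0::'a}) = N" unfolding N_def by (simp add: card_Diff_singleton)
  have ferm: "z ^ N = 1" if "z \<noteq> 0" for z :: 'a
  proof -
    have "z ^ card (UNIV - {0::'a}) = 1"
      by (rule pow_card_eq_1) (use that in auto)
    thus ?thesis using cF by simp
  qed
  have sf: "0 \<in> S" "\<forall>x\<in>S. \<forall>y\<in>S. x + y \<in> S \<and> x * y \<in> S" "\<forall>x\<in>S. - x \<in> S"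
    using assms(7) unfolding is_subfield_def by auto
  define Ss where "Ss = S - {0}"
  have cS: "card Ss = r - 1" unfolding Ss_def r_def using sf(1) assms(8)
    by (simp add: card_Diff_singleton)
  have ferS: "x ^ (r - 1) = 1" if "x \<in> Ss" for x
  proof -
    have "x ^ card Ss = 1"
      by (rule pow_card_eq_1) (use that sf in \<open>auto simp: Ss_def\<close>)
    thus ?thesis using cS by simp
  qed
  show ?thesis
  proof
    assume cl: "gp_clique d S"
    have xM: "x ^ M = 1" if "x \<in> Ss" for x
    proof -
      have "gp_adj d x 0" using cl that sf(1) unfolding gp_clique_def Ss_def by auto
      then obtain z where "z \<noteq> 0" "x = z ^ d" unfolding gp_adj_def by auto
      thus ?thesis using ferm[of z] NM by (simp add: power_mult[symmetric] mult.commute)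
    qed
    define g where "g = gcd M (r - 1)"
    have g1: "g \<ge> 1" unfolding g_def using r3
      by (simp add: Suc_le_eq)
    have "Ss \<subseteq> {x. x ^ g = 1}" unfolding g_def using xM ferS pow_gcd_eq_1 by blast
    hence "card Ss \<le> card {x::'a. x ^ g = 1}" by (simp add: card_mono)
    hence "r - 1 \<le> g" using cS card_pow_eq_le[OF g1, of "1::'a"] by linarith
    moreover have "g dvd r - 1" unfolding g_def by simp
    ultimately have "g = r - 1" using r3 by (simp add: dvd_imp_le le_antisym)
    hence "(r - 1) dvd M" using gcd_dvd1[of M "r - 1"] unfolding g_def by simp
    then obtain t where t: "M = (r - 1) * t" by auto
    have "(r - 1) * (t * d) = (r - 1) * (r + 1)" using NM Nr t by (simp add: mult.assoc)
    moreover have "r - 1 > 0" using r3 by simp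
    ultimately have "t * d = r + 1" by (metis mult_left_cancel not_gr0)
    thus "d dvd p ^ k + 1" unfolding r_def by (metis dvd_triv_right)
  next
    assume dv: "d dvd p ^ k + 1"
    then obtain t where t: "r + 1 = d * t" unfolding r_def by auto
    have e1: "(r - 1) * (r + 1) = (r - 1) * (d * t)" using t by simp
    have "M * d = ((r - 1) * t) * d" using NM Nr e1 by (metis mult.assoc mult.commute)
    hence Mt: "M = (r - 1) * t" using assms(4) by simp
    show "gp_clique d S" unfolding gp_clique_def gp_adj_def
    proof (intro ballI impI conjI)
      fix x y assume xy: "x \<in> S" "y \<in> S" "x \<noteq> y"
      thus "x \<noteq> y" by simp
      have "x + - y \<in> S" using sf xy by blast
      hence "x - y \<in> S" by simp
      hence w: "x - y \<in> Ss" using xy unfolding Ss_def by auto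
      have "(x - y) ^ (N div d) = 1" using ferS[OF w]
        by (simp add: M_def[symmetric] Mt power_mult)
      moreover have d1: "d \<ge> 1" using assms(4) by simp
      ultimately obtain z where "z \<noteq> 0" "x - y = z ^ d"
        using euler_crit[OF N_def dN d1] by blast
      thus "\<exists>z. z \<noteq> 0 \<and> x - y = z ^ d" by blast
    qed
  qed
qed

end
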